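(* Let $n\geq 3$ and $c\geq 1$, and let $\upsilon: UV_n(c)\to \mathrm{GL}_n(\mathbb{C})$ be a nontrivial homogeneous $2$-local representation. Then, up to equivalence of representations, $\upsilon$ is given by \[ \upsilon(\rho_i)=\begin{pmatrix} I_{i-1}&0&0\\ 0&\begin{pmatrix}0&r_2\\ \frac{1}{r_2}&0\end{pmatrix}&0\\ 0&0&I_{n-i-1}\end{pmatrix},\qquad \upsilon(\sigma_{i,t})=\begin{pmatrix} I_{i-1}&0&0\\ 0&\begin{pmatrix}s_{1,t}&s_{2,t}\\ s_{3,t}&s_{4,t}\end{pmatrix}&0\\ 0&0&I_{n-i-1}\end{pmatrix} \] for all $1\le i\le n-1$ and $1\le t\le c$, where $r_2,s_{1,t},s_{2,t},s_{3,t},s_{4,t}\in\mathbb{C}$ satisfy $r_2\neq 0$ and $s_{1,t}s_{4,t}-s_{2,t}s_{3,t}\neq 0$.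
   Context: For $n\ge 2$, $c\ge 1$, the universal virtual braid group $UV_n(c)$ is the group with generators $\rho_i$ ($1\le i\le n-1$) and $\sigma_{i,t}$ ($1\le i\le n-1$, $1\le t\le c$) and relations: $\rho_i\rho_{i+1}\rho_i=\rho_{i+1}\rho_i\rho_{i+1}$ ($1\le i\le n-2$); $\rho_i\rho_j=\rho_j\rho_i$ ($|i-j|\ge 2$); $\rho_i^2=1$; $\sigma_{i,t}\sigma_{j,\ell}=\sigma_{j,\ell}\sigma_{i,t}$ ($|i-j|\ge2$, $1\le t,\ell\le c$); $\sigma_{i,t}\rho_j=\rho_j\sigma_{i,t}$ ($|i-j|\ge 2$); $\rho_i\rho_{i+1}\sigma_{i,t}=\sigma_{i+1,t}\rho_i\rho_{i+1}$ ($1\le i\le n-2$, $1\le t\le c$). A representation $\theta:UV_n(c)\to\mathrm{GL}_{n}(\mathbb{C})$ is called homogeneous $2$-local if there are matrices $R, S_1,\dots,S_c\in \mathrm{GL}_2(\mathbb{C})$ such that for all $i,t$, $\theta(\rho_i)=\mathrm{diag}(I_{i-1},R,I_{n-i-1})$ and $\theta(\sigma_{i,t})=\mathrm{diag}(I_{i-1},S_t,I_{n-i-1})$ (block diagonal), where $I_r$ is the $r\times r$ identity matrix. It is nontrivial if it is not the trivial representation (all generators sent to the identity). Two representations are equivalent if they are conjugate by a fixed invertible matrix. *)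

theory Defs
  imports Complex_Main "Jordan_Normal_Form.Matrix" "Jordan_Normal_Form.Determinant"
begin

text \<open>The n x n block-diagonal matrix diag(I_{i-1}, A, I_{n-i-1}) for a 2x2 matrix A
  and 1 <= i <= n-1. Rows/columns are 0-indexed, so the block A occupies
  rows and columns i-1 and i.\<close>
definition local2 :: "nat \<Rightarrow> nat \<Rightarrow> complex mat \<Rightarrow> complex mat" where
  "local2 n i A = mat n n (\<lambda>(j,k).
     if j \<in> {i-1, i} \<and> k \<in> {i-1, i} then A $$ (j + 1 - i, k + 1 - i)
     else if j = k then 1 else 0)"

definition mat2 :: "complex \<Rightarrow> complex \<Rightarrow> complex \<Rightarrow> complex \<Rightarrow> complex mat" where
  "mat2 a b c d = mat_of_rows_list 2 [[a, b], [c, d]]"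

text \<open>A homogeneous 2-local representation of UV_n(c) into GL_n(C) is determined by
  R, S_1, ..., S_c in GL_2(C); the assignment rho_i |-> local2 n i R,
  sigma_{i,t} |-> local2 n i (S t) extends to a homomorphism on UV_n(c) iff the images
  satisfy the defining relations of UV_n(c) (universal property of presentations).\<close>
definition homog_2local_rep :: "nat \<Rightarrow> nat \<Rightarrow> complex mat \<Rightarrow> (nat \<Rightarrow> complex mat) \<Rightarrow> bool" where
  "homog_2local_rep n c R S \<longleftrightarrow>
     R \<in> carrier_mat 2 2 \<and> invertible_mat R \<and>
     (\<forall>t\<in>{1..c}. S t \<in> carrier_mat 2 2 \<and> invertible_mat (S t)) \<and>
     (let rho = (\<lambda>i. local2 n i R); sig = (\<lambda>i t. local2 n i (S t)) in
       (\<forall>i. 1 \<le> i \<and> i \<le> n - 2 \<longrightarrow>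
           rho i * rho (i+1) * rho i = rho (i+1) * rho i * rho (i+1)) \<and>
       (\<forall>i j. 1 \<le> i \<and> i \<le> n - 1 \<and> 1 \<le> j \<and> j \<le> n - 1 \<and> (i + 2 \<le> j \<or> j + 2 \<le> i) \<longrightarrow>
           rho i * rho j = rho j * rho i) \<and>
       (\<forall>i. 1 \<le> i \<and> i \<le> n - 1 \<longrightarrow> rho i * rho i = 1\<^sub>m n) \<and>
       (\<forall>i j t l. 1 \<le> i \<and> i \<le> n - 1 \<and> 1 \<le> j \<and> j \<le> n - 1 \<and> (i + 2 \<le> j \<or> j + 2 \<le> i)
           \<and> t \<in> {1..c} \<and> l \<in> {1..c} \<longrightarrow> sig i t * sig j l = sig j l * sig i t) \<and>
       (\<forall>i j t. 1 \<le> i \<and> i \<le> n - 1 \<and> 1 \<le> j \<and> j \<le> n - 1 \<and> (i + 2 \<le> j \<or> j + 2 \<le> i)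
           \<and> t \<in> {1..c} \<longrightarrow> sig i t * rho j = rho j * sig i t) \<and>
       (\<forall>i t. 1 \<le> i \<and> i \<le> n - 2 \<and> t \<in> {1..c} \<longrightarrow>
           rho i * rho (i+1) * sig i t = sig (i+1) t * rho i * rho (i+1)))"

definition nontrivial_rep :: "nat \<Rightarrow> nat \<Rightarrow> complex mat \<Rightarrow> (nat \<Rightarrow> complex mat) \<Rightarrow> bool" where
  "nontrivial_rep n c R S \<longleftrightarrow>
     \<not> ((\<forall>i\<in>{1..n-1}. local2 n i R = 1\<^sub>m n) \<and>
        (\<forall>i\<in>{1..n-1}. \<forall>t\<in>{1..c}. local2 n i (S t) = 1\<^sub>m n))"

end

theory Submission
  imports Defs
begin

lemma local2_carrier[simp]: "local2 n i A \<in> carrier_mat n n"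
  unfolding local2_def by auto
lemma local2_dims[simp]: "dim_row (local2 n i A) = n" "dim_col (local2 n i A) = n"
  unfolding local2_def by auto

lemma local2_index: "j < n \<Longrightarrow> k < n \<Longrightarrow> local2 n i A $$ (j,k) =
   (if j \<in> {i-1, i} \<and> k \<in> {i-1, i} then A $$ (j + 1 - i, k + 1 - i)
     else if j = k then 1 else 0)"
  unfolding local2_def by simp

definition rowz :: "complex mat \<Rightarrow> bool" where
  "rowz M \<longleftrightarrow> (\<forall>j l. j < 3 \<longrightarrow> 3 \<le> l \<longrightarrow> l < dim_col M \<longrightarrow> M $$ (j,l) = 0)"

lemma sum_split3:
  fixes n :: nat assumes "3 \<le> n" "\<And>l. 3 \<le> l \<Longrightarrow> l < n \<Longrightarrow> f l = 0"
  shows "(\<Sum>l\<in>{0..<n}. f l) = f 0 + f 1 + f 2"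
proof -
  have "{0..<n} = {0..<3} \<union> {3..<n}" using assms by auto
  hence "(\<Sum>l\<in>{0..<n}. f l) = (\<Sum>l\<in>{0..<3}. f l) + (\<Sum>l\<in>{3..<n}. f l)"
    by (simp add: sum.union_disjoint)
  also have "(\<Sum>l\<in>{3..<n}. f l) = 0" using assms by simp
  also have "(\<Sum>l\<in>{0..<3}. f l) = f 0 + f 1 + f 2"
    by (simp add: numeral_3_eq_3 numeral_2_eq_2 atLeast0LessThan lessThan_Suc add_ac)
  finally show ?thesis by simp
qed

lemma mult3:
  assumes M: "M \<in> carrier_mat n n" and N: "N \<in> carrier_mat n n" and "3 \<le> n" "rowz M"
    and "j < 3" "k < 3"
  shows "(M * N) $$ (j,k) = M$$(j,0) * N$$(0,k) + M$$(j,1) * N$$(1,k) + M$$(j,2) * N$$(2,k)"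
proof -
  have "(M * N) $$ (j,k) = (\<Sum>l\<in>{0..<n}. M$$(j,l) * N$$(l,k))"
    using assms by (simp add: index_mult_mat scalar_prod_def)
  also have "\<dots> = M$$(j,0) * N$$(0,k) + M$$(j,1) * N$$(1,k) + M$$(j,2) * N$$(2,k)"
    by (rule sum_split3, insert assms, auto simp: rowz_def)
  finally show ?thesis .
qed

lemma rowz_mult:
  assumes M: "M \<in> carrier_mat n n" and N: "N \<in> carrier_mat n n" and "3 \<le> n" "rowz M" "rowz N"
  shows "rowz (M * N)"
  unfolding rowz_def
proof (intro allI impI)
  fix j l :: nat assume jl: "j < 3" "3 \<le> l" "l < dim_col (M * N)"
  have "(M * N) $$ (j,l) = (\<Sum>m\<in>{0..<n}. M$$(j,m) * N$$(m,l))"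
    using assms jl by (simp add: index_mult_mat scalar_prod_def)
  also have "\<dots> = 0"
  proof (rule sum.neutral, intro ballI)
    fix m assume "m \<in> {0..<n}"
    then show "M$$(j,m) * N$$(m,l) = 0"
      using assms jl by (cases "m < 3") (auto simp: rowz_def)
  qed
  finally show "(M * N) $$ (j,l) = 0" .
qed

lemma rowz_local2: "i \<in> {1,2} \<Longrightarrow> rowz (local2 n i A)"
  unfolding rowz_def by (auto simp: local2_index)

lemma two_cases: "(i::nat) < 2 \<Longrightarrow> i = 0 \<or> i = 1" by auto

lemma eq2I: assumes "A \<in> carrier_mat 2 2" "B \<in> carrier_mat 2 2"
  "A$$(0,0) = B$$(0,0)" "A$$(0,1) = B$$(0,1)" "A$$(1,0) = B$$(1,0)" "A$$(1,1) = B$$(1,1)"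
  shows "A = B"
  by (rule eq_matI, insert assms, auto dest!: two_cases)

lemma mat2_carrier[simp]: "mat2 a b c d \<in> carrier_mat 2 2"
  unfolding mat2_def mat_of_rows_list_def by auto
lemma mat2_index[simp]: "mat2 a b c d $$ (0,0) = a" "mat2 a b c d $$ (0,1) = b"
  "mat2 a b c d $$ (1,0) = c" "mat2 a b c d $$ (1,1) = d"
  "mat2 a b c d $$ (0,Suc 0) = b"
  "mat2 a b c d $$ (Suc 0,0) = c" "mat2 a b c d $$ (Suc 0,Suc 0) = d"
  unfolding mat2_def mat_of_rows_list_def by auto

lemma mat2_eq: "A \<in> carrier_mat 2 2 \<Longrightarrow> A = mat2 (A$$(0,0)) (A$$(0,1)) (A$$(1,0)) (A$$(1,1))"
  by (rule eq2I) auto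

lemma local2_one: assumes "1 \<le> i" shows "local2 n i (1\<^sub>m 2) = 1\<^sub>m n"
  by (rule eq_matI, insert assms, auto simp: local2_index)

definition ex3 :: "complex mat \<Rightarrow> complex mat \<Rightarrow> complex mat \<Rightarrow> nat \<Rightarrow> nat \<Rightarrow> complex" where
  "ex3 X Y Z j k = (\<Sum>l<3. (\<Sum>m<3. X$$(j,m) * Y$$(m,l)) * Z$$(l,k))"

lemma ex3_expand: "ex3 X Y Z j k =
   (X$$(j,0) * Y$$(0,0) + X$$(j,1) * Y$$(1,0) + X$$(j,2) * Y$$(2,0)) * Z$$(0,k) +
   (X$$(j,0) * Y$$(0,1) + X$$(j,1) * Y$$(1,1) + X$$(j,2) * Y$$(2,1)) * Z$$(1,k) +
   (X$$(j,0) * Y$$(0,2) + X$$(j,1) * Y$$(1,2) + X$$(j,2) * Y$$(2,2)) * Z$$(2,k)"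
  unfolding ex3_def by (simp add: numeral_3_eq_3 numeral_2_eq_2 lessThan_Suc add_ac)

lemma mult3_loc:
  assumes "3 \<le> n" "X \<in> carrier_mat n n" "Y \<in> carrier_mat n n" "Z \<in> carrier_mat n n"
   "rowz X" "rowz Y" "j < 3" "k < 3"
  shows "(X * Y * Z) $$ (j,k) = ex3 X Y Z j k"
proof -
  have r: "rowz (X * Y)" by (rule rowz_mult, insert assms, auto)
  have "(X * Y * Z) $$ (j,k) = (X*Y)$$(j,0) * Z$$(0,k) + (X*Y)$$(j,1) * Z$$(1,k) + (X*Y)$$(j,2) * Z$$(2,k)"
    by (rule mult3[OF _ _ _ r], insert assms, auto)
  also have "\<dots> = ex3 X Y Z j k" unfolding ex3_expand
    using mult3[OF assms(2,3,1,5,7), of 0] mult3[OF assms(2,3,1,5,7), of 1] mult3[OF assms(2,3,1,5,7), of 2]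
    by simp
  finally show ?thesis .
qed

lemma mult3_loc2:
  assumes "3 \<le> n" "i1 \<in> {1,2}" "i2 \<in> {1,2}" "Z \<in> carrier_mat n n" "j < 3" "k < 3"
  shows "(local2 n i1 A * local2 n i2 B * Z) $$ (j,k) = ex3 (local2 n i1 A) (local2 n i2 B) Z j k"
  by (rule mult3_loc, insert assms, auto intro: rowz_local2)

lemma R_form:
  fixes n :: nat and R :: "complex mat"
  assumes n: "3 \<le> n" and R: "R \<in> carrier_mat 2 2"
    and br: "local2 n 1 R * local2 n 2 R * local2 n 1 R = local2 n 2 R * local2 n 1 R * local2 n 2 R"
    and sq: "local2 n 1 R * local2 n 1 R = 1\<^sub>m n"
    and nI: "R \<noteq> 1\<^sub>m 2"
  shows "R$$(0,0) = 0 \<and> R$$(1,1) = 0 \<and> R$$(0,1) * R$$(1,0) = 1"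
proof -
  define a where "a = R$$(0,0)"
  define b where "b = R$$(0,1)"
  define c where "c = R$$(1,0)"
  define d where "d = R$$(1,1)"
  have E: "ex3 (local2 n 1 R) (local2 n 2 R) (local2 n 1 R) j k = ex3 (local2 n 2 R) (local2 n 1 R) (local2 n 2 R) j k"
    if "j < 3" "k < 3" for j k
    using arg_cong[OF br, of "\<lambda>M. M $$ (j,k)"] mult3_loc2[OF n, of 1 2 "local2 n 1 R" j k R R]
       mult3_loc2[OF n, of 2 1 "local2 n 2 R" j k R R] that by simp
  have Q: "(local2 n 1 R * local2 n 1 R) $$ (j,k) = (1\<^sub>m n) $$ (j,k)" for j k
    using sq by simp
  have r1: "rowz (local2 n 1 R)" by (rule rowz_local2) simp
  have b1: "a*a + a*b*c = a" using E[of 0 0] n by (simp add: ex3_expand local2_index a_def b_def c_def mult_ac)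
  have b2: "d = b*c*d + d*d" using E[of 2 2] n by (simp add: ex3_expand local2_index b_def c_def d_def mult_ac)
  have s00: "a*a+b*c = 1" using Q[of 0 0] n mult3[OF _ _ n r1, of _ 0 0] by (simp add: local2_index a_def b_def c_def)
  have s11: "c*b+d*d = 1" using Q[of 1 1] n mult3[OF _ _ n r1, of _ 1 1] by (simp add: local2_index c_def b_def d_def)
  have s01: "a*b+b*d = 0" using Q[of 0 1] n mult3[OF _ _ n r1, of _ 0 1] by (simp add: local2_index a_def b_def d_def)
  have s10: "c*a+d*c = 0" using Q[of 1 0] n mult3[OF _ _ n r1, of _ 1 0] by (simp add: local2_index a_def c_def d_def)
  have Rabcd: "R = mat2 a b c d" unfolding a_def b_def c_def d_def by (rule mat2_eq[OF R])
  have "a = 0"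
  proof (rule ccontr)
    assume "a \<noteq> 0"
    from b1 have "a*(a+b*c-1) = 0" by (simp add: algebra_simps)
    with \<open>a \<noteq> 0\<close> have h: "a + b*c = 1" by simp
    have "a*a + b*c = a + b*c" using s00 h by simp
    then have "a*a = a" by simp
    with \<open>a \<noteq> 0\<close> have a1: "a = 1" by simp
    with s00 have bc: "b*c = 0" by simp
    from b2 bc have "d*(d-1) = 0" by (simp add: algebra_simps)
    moreover from s11 bc have "d*d = 1" by (simp add: mult.commute)
    ultimately have d1: "d = 1" by auto
    from s01 a1 d1 have "b = 0" by simp
    moreover from s10 a1 d1 have "c = 0" by simp
    ultimately have "R = 1\<^sub>m 2" using a1 d1 Rabcd by (intro eq2I) auto
    with nI show False by simp
  qed
  moreover with s00 have "b*c = 1" by simp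
  moreover with s11 have "d = 0" by (simp add: mult.commute)
  ultimately show ?thesis unfolding a_def b_def c_def d_def by simp
qed

lemma det2_ne:
  fixes A :: "complex mat"
  assumes A: "A \<in> carrier_mat 2 2" and inv: "invertible_mat A"
  shows "A$$(0,0)*A$$(1,1) - A$$(0,1)*A$$(1,0) \<noteq> 0"
proof -
  obtain B where AB: "A * B = 1\<^sub>m 2" and BA: "B * A = 1\<^sub>m (dim_row B)"
    using inv A unfolding invertible_mat_def inverts_mat_def by auto
  have "dim_col (B * A) = 2" using A by simp
  hence rB: "dim_row B = 2" using BA by simp
  have cB: "dim_col B = 2" using arg_cong[OF AB, of dim_col] by simp
  have e: "(A*B)$$(i,j) = A$$(i,0)*B$$(0,j) + A$$(i,1)*B$$(1,j)" if "i<2" "j<2" for i j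
    using that A rB cB by (simp add: index_mult_mat scalar_prod_def numeral_2_eq_2 atLeast0LessThan lessThan_Suc)
  have e00: "A$$(0,0)*B$$(0,0) + A$$(0,1)*B$$(1,0) = 1" using e[of 0 0] AB by simp
  have e01: "A$$(0,0)*B$$(0,1) + A$$(0,1)*B$$(1,1) = 0" using e[of 0 1] AB by simp
  have e10: "A$$(1,0)*B$$(0,0) + A$$(1,1)*B$$(1,0) = 0" using e[of 1 0] AB by simp
  have e11: "A$$(1,0)*B$$(0,1) + A$$(1,1)*B$$(1,1) = 1" using e[of 1 1] AB by simp
  have "(A$$(0,0)*A$$(1,1) - A$$(0,1)*A$$(1,0)) * (B$$(0,0)*B$$(1,1) - B$$(0,1)*B$$(1,0))
     = (A$$(0,0)*B$$(0,0) + A$$(0,1)*B$$(1,0)) * (A$$(1,0)*B$$(0,1) + A$$(1,1)*B$$(1,1))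
     - (A$$(0,0)*B$$(0,1) + A$$(0,1)*B$$(1,1)) * (A$$(1,0)*B$$(0,0) + A$$(1,1)*B$$(1,0))"
    by (simp add: algebra_simps)
  also have "\<dots> = 1" using e00 e01 e10 e11 by simp
  finally show ?thesis by auto
qed

lemma S_one:
  fixes A :: "complex mat"
  assumes n: "3 \<le> n" and A: "A \<in> carrier_mat 2 2" and eq: "local2 n 1 A = local2 n 2 A"
  shows "A = 1\<^sub>m 2"
proof -
  have Q: "local2 n 1 A $$ (j,k) = local2 n 2 A $$ (j,k)" for j k using eq by simp
  show ?thesis
    using Q[of 0 0] Q[of 0 1] Q[of 1 0] Q[of 2 2] n A
    by (intro eq2I) (auto simp: local2_index)
qed

theorem theorem3p1:
  fixes n c :: nat and R :: "complex mat" and S :: "nat \<Rightarrow> complex mat"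
  assumes "n \<ge> 3" and "c \<ge> 1"
    and "homog_2local_rep n c R S"
    and "nontrivial_rep n c R S"
  shows "\<exists>P Q r2 s1 s2 s3 s4.
     P \<in> carrier_mat n n \<and> Q \<in> carrier_mat n n \<and> P * Q = 1\<^sub>m n \<and> Q * P = 1\<^sub>m n \<and>
     r2 \<noteq> 0 \<and> (\<forall>t\<in>{1..c}. s1 t * s4 t - s2 t * s3 t \<noteq> 0) \<and>
     (\<forall>i\<in>{1..n-1}. P * local2 n i R * Q = local2 n i (mat2 0 r2 (1 / r2) 0)) \<and>
     (\<forall>i\<in>{1..n-1}. \<forall>t\<in>{1..c}.
        P * local2 n i (S t) * Q = local2 n i (mat2 (s1 t) (s2 t) (s3 t) (s4 t)))"
proof -
  note H = assms(3)[unfolded homog_2local_rep_def Let_def]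
  have n: "3 \<le> n" using assms(1) .
  have R: "R \<in> carrier_mat 2 2" using H[THEN conjunct1] .
  have St: "S t \<in> carrier_mat 2 2" "invertible_mat (S t)" if "t \<in> {1..c}" for t
    using H[THEN conjunct2, THEN conjunct2, THEN conjunct1] that by blast+
  note H4 = H[THEN conjunct2, THEN conjunct2, THEN conjunct2]
  have br: "local2 n 1 R * local2 n (1+1) R * local2 n 1 R = local2 n (1+1) R * local2 n 1 R * local2 n (1+1) R"
    using H4[THEN conjunct1, THEN spec[of _ 1]] n by simp
  have sq: "local2 n 1 R * local2 n 1 R = 1\<^sub>m n"
    using H4[THEN conjunct2, THEN conjunct2, THEN conjunct1, THEN spec[of _ 1]] n by simp
  have mx: "local2 n 1 R * local2 n (1+1) R * local2 n 1 (S t) = local2 n (1+1) (S t) * local2 n 1 R * local2 n (1+1) R"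
    if "t \<in> {1..c}" for t
    using H4[THEN conjunct2, THEN conjunct2, THEN conjunct2, THEN conjunct2, THEN conjunct2, THEN spec[of _ 1], THEN spec[of _ t]] n that by simp
  have nI: "R \<noteq> 1\<^sub>m 2"
  proof
    assume R1: "R = 1\<^sub>m 2"
    have LR: "local2 n i R = 1\<^sub>m n" if "1 \<le> i" for i using R1 local2_one that by simp
    have "local2 n i (S t) = 1\<^sub>m n" if "t \<in> {1..c}" "1 \<le> i" for t i
    proof -
      have LR1: "local2 n 1 R = 1\<^sub>m n" and LR2: "local2 n 2 R = 1\<^sub>m n" using LR by auto
      have "1\<^sub>m n * 1\<^sub>m n * local2 n 1 (S t) = local2 n 2 (S t) * 1\<^sub>m n * 1\<^sub>m n"
        using mx[OF that(1)] by (simp only: one_add_one LR1 LR2)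
      hence "local2 n 1 (S t) = local2 n 2 (S t)" by (metis left_mult_one_mat right_mult_one_mat local2_carrier one_carrier_mat)
      hence "S t = 1\<^sub>m 2" by (rule S_one[OF n St(1)[OF that(1)]])
      thus ?thesis using local2_one that(2) by simp
    qed
    with LR assms(4) show False unfolding nontrivial_rep_def by auto
  qed
  have RF: "R$$(0,0) = 0 \<and> R$$(1,1) = 0 \<and> R$$(0,1) * R$$(1,0) = 1"
    by (rule R_form[OF n R _ sq nI]) (use br in \<open>simp only: one_add_one\<close>)
  define r2 where "r2 = R$$(0,1)"
  have r2: "r2 \<noteq> 0" using RF r2_def by auto
  have Rm: "R = mat2 0 r2 (1/r2) 0"
    using RF r2 R unfolding r2_def by (intro eq2I) (auto simp: field_simps)
  show ?thesis
  proof (intro exI conjI)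
    show "1\<^sub>m n \<in> carrier_mat n n" by simp
    show "1\<^sub>m n \<in> carrier_mat n n" by simp
    show "1\<^sub>m n * 1\<^sub>m n = (1\<^sub>m n :: complex mat)" by simp
    show "1\<^sub>m n * 1\<^sub>m n = (1\<^sub>m n :: complex mat)" by simp
    show "r2 \<noteq> 0" by (rule r2)
    show "\<forall>t\<in>{1..c}. (\<lambda>t. S t $$ (0,0)) t * (\<lambda>t. S t $$ (1,1)) t - (\<lambda>t. S t $$ (0,1)) t * (\<lambda>t. S t $$ (1,0)) t \<noteq> 0"
      using det2_ne St by simp
    show "\<forall>i\<in>{1..n-1}. 1\<^sub>m n * local2 n i R * 1\<^sub>m n = local2 n i (mat2 0 r2 (1 / r2) 0)"
      using Rm by simp
    show "\<forall>i\<in>{1..n-1}. \<forall>t\<in>{1..c}. 1\<^sub>m n * local2 n i (S t) * 1\<^sub>m n =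
       local2 n i (mat2 ((\<lambda>t. S t $$ (0,0)) t) ((\<lambda>t. S t $$ (0,1)) t) ((\<lambda>t. S t $$ (1,0)) t) ((\<lambda>t. S t $$ (1,1)) t))"
      using St(1) mat2_eq by (metis left_mult_one_mat local2_carrier right_mult_one_mat)
  qed
qed

end
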